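(* Let $\mathcal X$ be locally convex and let $\rho$ be proper, convex and lower semicontinuous. Then $\mathcal D$ is nonempty and $$\rho(X)=\sup_{\psi\in\mathcal D}\{\sigma_{\mathcal A}(\psi)+\sigma_{\mathcal P,V_0,V_1}(\psi)-\psi(X)\}\quad\text{for all }X\in\mathcal X.$$
   Context: Standing setup: Let $\mathcal{X}$ be a real topological vector space partially ordered by a convex cone $\mathcal{X}_+\subset\mathcal X$; write $X\ge Y$ iff $X-Y\in\mathcal X_+$. Fix $N\in\mathbb N$ and: a set $\mathcal P\subset\mathbb R^N$ with $0\in\mathcal P$; a function $V_0:\mathbb R^N\to\mathbb R$ with $V_0(0)=0$ and $V_0(x)\ge -V_0(-x)$ for all $x\in\mathbb R^N$; a map $V_1:\mathbb R^N\to\mathcal X$ with $V_1(0)=0$ and $V_1(x)\le -V_1(-x)$ for all $x\in\mathbb R^N$; a set $\mathcal A\subset\mathcal X$ with $0\in\mathcal A$ and $\mathcal A+\mathcal X_+\subset\mathcal A$. The risk measure is $\rho:\mathcal X\to[-\infty,\infty]$, $\rho(X)=\inf\{V_0(x): x\in\mathcal P,\ X+V_1(x)\in\mathcal A\}$, with $\inf\emptyset=+\infty$. $\rho$ is proper if it never takes the value $-\infty$ and is not identically $+\infty$. Duality notation: $\mathcal X'$ is the topological dual of $\mathcal X$. For $\psi\in\mathcal X'$: $\sigma_{\mathcal A}(\psi)=\inf_{X\in\mathcal A}\psi(X)$ and $\sigma_{\mathcal P,V_0,V_1}(\psi)=\inf_{x\in\mathcal P}\{V_0(x)-\psi(V_1(x))\}$.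 $\mathcal D=\{\psi\in\mathcal X':\sigma_{\mathcal A}(\psi)>-\infty,\ \sigma_{\mathcal P,V_0,V_1}(\psi)>-\infty\}$. *)

theory Defs
  imports "HOL-Analysis.Analysis"
begin

definition tvs :: "'x::{real_vector,topological_space} itself \<Rightarrow> bool" where
  "tvs _ \<longleftrightarrow> continuous_on UNIV (\<lambda>p::'x \<times> 'x. fst p + snd p)
           \<and> continuous_on UNIV (\<lambda>p::real \<times> 'x. fst p *\<^sub>R snd p)"

definition locally_convex_tvs :: "'x::{real_vector,topological_space} itself \<Rightarrow> bool" where
  "locally_convex_tvs T \<longleftrightarrow> tvs T \<and>
     (\<forall>x::'x. \<forall>U. open U \<and> x \<in> U \<longrightarrow> (\<exists>V. open V \<and> convex V \<and> x \<in> V \<and> V \<subseteq> U))"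

definition topdual :: "('x::{real_vector,topological_space} \<Rightarrow> real) set" where
  "topdual = {\<psi>. linear \<psi> \<and> continuous_on UNIV \<psi>}"

text \<open>The risk measure rho(X) = inf { V0 x : x in P, X + V1 x in A }, inf of empty = +infinity.\<close>

definition risk :: "(real^'n) set \<Rightarrow> (real^'n \<Rightarrow> real) \<Rightarrow> (real^'n \<Rightarrow> 'x::real_vector)
                     \<Rightarrow> 'x set \<Rightarrow> 'x \<Rightarrow> ereal" where
  "risk P V0 V1 A X = Inf {ereal (V0 x) | x. x \<in> P \<and> X + V1 x \<in> A}"

definition proper_fun :: "('x \<Rightarrow> ereal) \<Rightarrow> bool" where
  "proper_fun f \<longleftrightarrow> (\<forall>X. f X \<noteq> -\<infinity>) \<and> (\<exists>X. f X \<noteq> \<infinity>)"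

definition convex_efun :: "('x::real_vector \<Rightarrow> ereal) \<Rightarrow> bool" where
  "convex_efun f \<longleftrightarrow> convex {(X, t::real). f X \<le> ereal t}"

definition lsc_efun :: "('x::topological_space \<Rightarrow> ereal) \<Rightarrow> bool" where
  "lsc_efun f \<longleftrightarrow> (\<forall>c::real. closed {X. f X \<le> ereal c})"

definition sigmaA :: "'x set \<Rightarrow> ('x \<Rightarrow> real) \<Rightarrow> ereal" where
  "sigmaA A \<psi> = Inf {ereal (\<psi> X) | X. X \<in> A}"

definition sigmaPV :: "(real^'n) set \<Rightarrow> (real^'n \<Rightarrow> real) \<Rightarrow> (real^'n \<Rightarrow> 'x)
                       \<Rightarrow> ('x \<Rightarrow> real) \<Rightarrow> ereal" where
  "sigmaPV P V0 V1 \<psi> = Inf {ereal (V0 x - \<psi> (V1 x)) | x. x \<in> P}"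

definition dualD :: "'x::{real_vector,topological_space} set \<Rightarrow> (real^'n) set
                     \<Rightarrow> (real^'n \<Rightarrow> real) \<Rightarrow> (real^'n \<Rightarrow> 'x) \<Rightarrow> ('x \<Rightarrow> real) set" where
  "dualD A P V0 V1 = {\<psi> \<in> topdual. sigmaA A \<psi> > -\<infinity> \<and> sigmaPV P V0 V1 \<psi> > -\<infinity>}"

end

theory Submission
  imports Defs
begin


definition sublin :: "('w::real_vector \<Rightarrow> real) \<Rightarrow> bool" where
 "sublin p \<longleftrightarrow> (\<forall>x y. p (x + y) \<le> p x + p y) \<and> (\<forall>c x. 0 \<le> c \<longrightarrow> p (c *\<^sub>R x) = c * p x)"

lemma sublin_add: "sublin p \<Longrightarrow> p (x + y) \<le> p x + p y"
  by (simp add: sublin_def)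
lemma sublin_scale: "sublin p \<Longrightarrow> 0 \<le> c \<Longrightarrow> p (c *\<^sub>R x) = c * p x"
  by (simp add: sublin_def)
lemma sublin_0: "sublin p \<Longrightarrow> p 0 = 0"
  using sublin_scale[of p 0 0] by simp
lemma sublin_neg: "sublin p \<Longrightarrow> - p (-x) \<le> p x"
  using sublin_add[of p x "-x"] sublin_0[of p] by simp

lemma homog_from_le:
  fixes q :: "'w::real_vector \<Rightarrow> real" and c :: real
  assumes "\<And>c x. 0 < c \<Longrightarrow> q (c *\<^sub>R x) \<le> c * q x" "0 < c"
  shows "q (c *\<^sub>R x) = c * q x"
proof -
  have "q x = q ((1/c) *\<^sub>R (c *\<^sub>R x))" using assms(2) by (simp add: scaleR_scaleR less_imp_neq[symmetric])
  also have "\<dots> \<le> (1/c) * q (c *\<^sub>R x)" using assms(1)[of "1/c" "c *\<^sub>R x"] assms(2) by simp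
  finally have "c * q x \<le> q (c *\<^sub>R x)" using assms(2) by (simp add: field_simps)
  with assms show ?thesis by (meson antisym)
qed

definition shiftf :: "('w::real_vector \<Rightarrow> real) \<Rightarrow> 'w \<Rightarrow> 'w \<Rightarrow> real" where
 "shiftf p y x = Inf ((\<lambda>t. p (x + t *\<^sub>R y) - t * p y) ` {0..})"

lemma shift_bdd:
  assumes "sublin p"
  shows "bdd_below ((\<lambda>t. p (x + t *\<^sub>R y) - t * p y) ` {0..})"
proof (rule bdd_belowI2[where m="- p (-x)"])
  fix t :: real assume "t \<in> {0..}"
  then have "p (t *\<^sub>R y) = t * p y" using sublin_scale[OF assms] by simp
  moreover have "p (t *\<^sub>R y) \<le> p (x + t *\<^sub>R y) + p (-x)"
    using sublin_add[OF assms, of "x + t *\<^sub>R y" "-x"] by simp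
  ultimately show "- p (-x) \<le> p (x + t *\<^sub>R y) - t * p y" by simp
qed

lemma shift_le:
  assumes "sublin p" "0 \<le> t"
  shows "shiftf p y x \<le> p (x + t *\<^sub>R y) - t * p y"
  unfolding shiftf_def using assms shift_bdd[OF assms(1)] by (intro cInf_lower) auto

lemma shift_ge:
  assumes "\<And>t. 0 \<le> t \<Longrightarrow> m \<le> p (x + t *\<^sub>R y) - t * p y"
  shows "m \<le> shiftf p y x"
  unfolding shiftf_def using assms by (intro cInf_greatest) auto

lemma shift_sublin:
  assumes sp: "sublin p"
  shows "sublin (shiftf p y)"
proof -
  have add: "shiftf p y (x1 + x2) \<le> shiftf p y x1 + shiftf p y x2" for x1 x2
  proof -
    have key: "shiftf p y (x1 + x2) \<le> (p (x1 + t1 *\<^sub>R y) - t1 * p y) + (p (x2 + t2 *\<^sub>R y) - t2 * p y)"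
      if "0 \<le> t1" "0 \<le> t2" for t1 t2
    proof -
      have "shiftf p y (x1 + x2) \<le> p (x1 + x2 + (t1 + t2) *\<^sub>R y) - (t1 + t2) * p y"
        using shift_le[OF sp] that by simp
      also have "x1 + x2 + (t1 + t2) *\<^sub>R y = (x1 + t1 *\<^sub>R y) + (x2 + t2 *\<^sub>R y)"
        by (simp add: algebra_simps)
      finally show ?thesis using sublin_add[OF sp, of "x1 + t1 *\<^sub>R y" "x2 + t2 *\<^sub>R y"]
        by (simp add: algebra_simps)
    qed
    have "shiftf p y (x1 + x2) - (p (x2 + t2 *\<^sub>R y) - t2 * p y) \<le> shiftf p y x1" if "0 \<le> t2" for t2
      by (rule shift_ge) (use key that in force)
    then have "shiftf p y (x1 + x2) - shiftf p y x1 \<le> shiftf p y x2"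
      by (intro shift_ge) force
    then show ?thesis by simp
  qed
  have le: "shiftf p y (c *\<^sub>R x) \<le> c * shiftf p y x" if "0 < c" for c x
  proof -
    have "shiftf p y (c *\<^sub>R x) / c \<le> shiftf p y x"
    proof (rule shift_ge)
      fix t :: real assume t: "0 \<le> t"
      have "shiftf p y (c *\<^sub>R x) \<le> p (c *\<^sub>R x + (c * t) *\<^sub>R y) - (c * t) * p y"
        using shift_le[OF sp] t that by simp
      also have "c *\<^sub>R x + (c * t) *\<^sub>R y = c *\<^sub>R (x + t *\<^sub>R y)" by (simp add: algebra_simps)
      also have "p (c *\<^sub>R (x + t *\<^sub>R y)) = c * p (x + t *\<^sub>R y)"
        using sublin_scale[OF sp, of c] that by simp
      finally have "shiftf p y (c *\<^sub>R x) \<le> c * (p (x + t *\<^sub>R y) - t * p y)"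
        by (simp add: algebra_simps)
      then show "shiftf p y (c *\<^sub>R x) / c \<le> p (x + t *\<^sub>R y) - t * p y"
        using that by (simp add: field_simps)
    qed
    then show ?thesis using that by (simp add: field_simps)
  qed
  have z: "shiftf p y 0 = 0"
  proof -
    have "(\<lambda>t. p (0 + t *\<^sub>R y) - t * p y) ` {0..} = {0}"
      using sublin_scale[OF sp] by force
    then show ?thesis by (simp add: shiftf_def)
  qed
  have "shiftf p y (c *\<^sub>R x) = c * shiftf p y x" if "0 \<le> c" for c x
  proof (cases "c = 0")
    case True then show ?thesis using z by simp
  next
    case False then show ?thesis using homog_from_le[of "shiftf p y", OF le] that by simp
  qed
  with add show ?thesis by (simp add: sublin_def)
qed

lemma sublin_lower_neg:
  assumes "sublin q" "\<forall>x. q x \<le> p x"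
  shows "- p (-x) \<le> q x"
  using sublin_neg[OF assms(1), of x] assms(2) by (metis neg_le_iff_le order_trans)

lemma HB:
  fixes p :: "'w::real_vector \<Rightarrow> real"
  assumes sp: "sublin p"
  shows "\<exists>L. linear L \<and> (\<forall>x. L x \<le> p x)"
proof -
  define Q where "Q = {q. sublin q \<and> (\<forall>x. q x \<le> p x)}"
  define epi :: "('w \<Rightarrow> real) \<Rightarrow> ('w \<times> real) set" where "epi q = {(x,t). q x \<le> t}" for q
  have epi_sub: "epi q1 \<subseteq> epi q2 \<longleftrightarrow> (\<forall>x. q2 x \<le> q1 x)" for q1 q2
  proof
    assume h: "epi q1 \<subseteq> epi q2"
    show "\<forall>x. q2 x \<le> q1 x"
    proof
      fix x have "(x, q1 x) \<in> epi q1" by (simp add: epi_def)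
      with h show "q2 x \<le> q1 x" by (auto simp: epi_def)
    qed
  qed (auto simp: epi_def intro: order_trans)
  have pQ: "p \<in> Q" using sp by (simp add: Q_def)
  have "\<exists>M\<in>epi ` Q. \<forall>X\<in>epi ` Q. M \<subseteq> X \<longrightarrow> X = M"
  proof (rule Zorn_Lemma2, intro ballI)
    fix C assume C: "C \<in> chains (epi ` Q)"
    show "\<exists>U\<in>epi ` Q. \<forall>X\<in>C. X \<subseteq> U"
    proof (cases "C = {}")
      case True then show ?thesis using pQ by blast
    next
      case False
      define Q' where "Q' = {q \<in> Q. epi q \<in> C}"
      have CQ: "C \<subseteq> epi ` Q" and ch: "chain\<^sub>\<subseteq> C" using C by (auto simp: chains_def)
      have Q'ne: "Q' \<noteq> {}" using CQ False by (auto simp: Q'_def)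
      have cmp: "(\<forall>x. q2 x \<le> q1 x) \<or> (\<forall>x. q1 x \<le> q2 x)" if "q1 \<in> Q'" "q2 \<in> Q'" for q1 q2
      proof -
        have "epi q1 \<in> C" "epi q2 \<in> C" using that by (auto simp: Q'_def)
        then have "epi q1 \<subseteq> epi q2 \<or> epi q2 \<subseteq> epi q1" using ch unfolding chain_subset_def by blast
        then show ?thesis unfolding epi_sub .
      qed
      have Q'Q: "Q' \<subseteq> Q" by (auto simp: Q'_def)
      define r where "r x = Inf ((\<lambda>q. q x) ` Q')" for x
      have bdd: "bdd_below ((\<lambda>q. q x) ` Q')" for x
      proof (rule bdd_belowI2[where m="- p (-x)"])
        fix q assume "q \<in> Q'"
        then have "sublin q \<and> (\<forall>x. q x \<le> p x)" using Q'Q by (auto simp: Q_def)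
        then show "- p (- x) \<le> q x" using sublin_lower_neg by blast
      qed
      have rle: "r x \<le> q x" if "q \<in> Q'" for q x
        unfolding r_def using bdd that by (intro cInf_lower) auto
      have rge: "m \<le> r x" if "\<And>q. q \<in> Q' \<Longrightarrow> m \<le> q x" for m x
        unfolding r_def using Q'ne that by (intro cInf_greatest) auto
      have less: "\<exists>q\<in>Q'. q x < r x + e" if "e > 0" for x e
      proof (rule ccontr)
        assume "\<not> ?thesis"
        then have "r x + e \<le> r x" by (intro rge) (auto simp: not_less)
        with that show False by simp
      qed
      have qsub: "sublin q" if "q \<in> Q'" for q using that Q'Q by (auto simp: Q_def)
      have radd: "r (x + y) \<le> r x + r y" for x y
      proof (rule ccontr)
        assume "\<not> ?thesis"
        then have e: "(r (x + y) - r x - r y) / 2 > 0" by simp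
        obtain q1 where q1: "q1 \<in> Q'" "q1 x < r x + (r (x + y) - r x - r y) / 2"
          using less[OF e] by blast
        obtain q2 where q2: "q2 \<in> Q'" "q2 y < r y + (r (x + y) - r x - r y) / 2"
          using less[OF e] by blast
        have "\<exists>q\<in>Q'. q x \<le> q1 x \<and> q y \<le> q2 y"
          using cmp[OF q1(1) q2(1)] q1(1) q2(1) by fastforce
        then obtain q where q: "q \<in> Q'" "q x \<le> q1 x" "q y \<le> q2 y" by blast
        have "r (x + y) \<le> q (x + y)" using rle q(1) by simp
        also have "\<dots> \<le> q x + q y" using sublin_add[OF qsub[OF q(1)]] .
        finally show False using q q1 q2 by (simp add: field_simps)
      qed
      have rle2: "r (c *\<^sub>R x) \<le> c * r x" if "0 < c" for c x
      proof -
        have "r (c *\<^sub>R x) / c \<le> r x"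
        proof (rule rge)
          fix q assume "q \<in> Q'"
          then have "r (c *\<^sub>R x) \<le> c * q x" using rle[of q] sublin_scale[OF qsub] that by force
          then show "r (c *\<^sub>R x) / c \<le> q x" using that by (simp add: field_simps)
        qed
        then show ?thesis using that by (simp add: field_simps)
      qed
      have r0: "r 0 = 0"
      proof -
        have "(\<lambda>q. q 0) ` Q' = {0}" using Q'ne qsub sublin_0 by fastforce
        then show ?thesis by (simp add: r_def)
      qed
      have "sublin r"
        unfolding sublin_def
      proof (intro conjI allI impI)
        fix c x assume "0 \<le> (c::real)"
        then show "r (c *\<^sub>R x) = c * r x"
          using r0 homog_from_le[of r, OF rle2] by (cases "c = 0") auto
      qed (rule radd)
      moreover have "\<forall>x. r x \<le> p x"
      proof
        fix x obtain q where "q \<in> Q'" using Q'ne by blast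
        then have "r x \<le> q x" "q x \<le> p x" using rle Q'Q by (auto simp: Q_def)
        then show "r x \<le> p x" by linarith
      qed
      ultimately have "r \<in> Q" by (simp add: Q_def)
      moreover have "\<forall>X\<in>C. X \<subseteq> epi r"
      proof
        fix X assume X: "X \<in> C"
        then obtain q where q: "q \<in> Q" "X = epi q" using CQ by blast
        then have "q \<in> Q'" using X by (simp add: Q'_def)
        then have "\<forall>x. r x \<le> q x" using rle by blast
        then show "X \<subseteq> epi r" using q(2) epi_sub by blast
      qed
      ultimately show ?thesis by blast
    qed
  qed
  then obtain q0 where q0: "q0 \<in> Q" and maxi: "\<forall>X\<in>epi ` Q. epi q0 \<subseteq> X \<longrightarrow> X = epi q0"
    by blast
  have sq0: "sublin q0" and q0p: "\<forall>x. q0 x \<le> p x" using q0 by (auto simp: Q_def)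
  have mini: "q = q0" if "q \<in> Q" "\<forall>x. q x \<le> q0 x" for q
  proof -
    have "epi q0 \<subseteq> epi q" using that(2) epi_sub by blast
    then have "epi q = epi q0" using maxi that(1) by blast
    then have "epi q \<subseteq> epi q0" by simp
    then have "\<forall>x. q0 x \<le> q x" using epi_sub by blast
    then show ?thesis using that(2) by (intro ext antisym) auto
  qed
  have addq: "q0 (x + y) = q0 x + q0 y" for x y
  proof -
    have sl: "\<forall>x. shiftf q0 y x \<le> q0 x" using shift_le[OF sq0, of 0] by simp
    have "shiftf q0 y \<in> Q"
      using shift_sublin[OF sq0] sl q0p unfolding Q_def by (auto intro: order_trans)
    moreover note sl
    ultimately have "shiftf q0 y = q0" by (rule mini)
    then have "q0 x \<le> q0 (x + y) - q0 y" using shift_le[OF sq0, of 1 y x] by simp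
    then show ?thesis using sublin_add[OF sq0, of x y] by simp
  qed
  have negq: "q0 (- x) = - q0 x" for x using addq[of x "-x"] sublin_0[OF sq0] by simp
  have "linear q0"
  proof (rule linearI)
    fix c :: real and x
    show "q0 (c *\<^sub>R x) = c *\<^sub>R q0 x"
    proof (cases "0 \<le> c")
      case True then show ?thesis using sublin_scale[OF sq0] by simp
    next
      case False
      then have "q0 (c *\<^sub>R x) = q0 ((-c) *\<^sub>R (-x))" by simp
      also have "\<dots> = (-c) * q0 (-x)" using sublin_scale[OF sq0, of "-c" "-x"] False by linarith
      finally show ?thesis using negq[of x] by simp
    qed
  qed (rule addq)
  then show ?thesis using q0p by blast
qed

lemma HB2:
  fixes p :: "'w::real_vector \<Rightarrow> real"
  assumes sp: "sublin p"
  shows "\<exists>L. linear L \<and> (\<forall>x. L x \<le> p x) \<and> L y = p y"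
proof -
  obtain L where L: "linear L" "\<forall>x. L x \<le> shiftf p y x"
    using HB[OF shift_sublin[OF sp]] by blast
  have le: "\<forall>x. L x \<le> p x"
  proof
    fix x show "L x \<le> p x" using spec[OF L(2), of x] shift_le[OF sp, of 0 y x] by simp
  qed
  have "L (-y) \<le> - p y" using spec[OF L(2), of "-y"] shift_le[OF sp, of 1 y "-y"] sublin_0[OF sp] by simp
  then have "p y \<le> L y" using linear_neg[OF L(1)] by simp
  with le L(1) show ?thesis by (meson antisym)
qed



lemma cont_open_vimage:
  assumes "continuous_on UNIV f" "open B" shows "open (f -` B)"
  using assms continuous_on_open_vimage[of UNIV f] by simp

lemma cont_from_vimage:
  assumes "\<And>B. open B \<Longrightarrow> open (f -` B)" shows "continuous_on UNIV f"
  using assms continuous_on_open_vimage[of UNIV f] by simp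

lemma tvs_add:
  fixes a :: "'x::{real_vector,topological_space}"
  assumes "tvs TYPE('x)" shows "continuous_on UNIV (\<lambda>x. a + x)"
proof -
  have c: "continuous_on UNIV (\<lambda>p::'x \<times> 'x. fst p + snd p)" using assms by (simp add: tvs_def)
  have "continuous_on UNIV (\<lambda>x::'x. (a, x))"
    by (intro continuous_on_Pair continuous_on_const continuous_on_id)
  from continuous_on_compose2[OF c this] show ?thesis by simp
qed

lemma tvs_scale:
  fixes c :: real
  assumes "tvs TYPE('x::{real_vector,topological_space})" shows "continuous_on UNIV (\<lambda>x::'x. c *\<^sub>R x)"
proof -
  have s: "continuous_on UNIV (\<lambda>p::real \<times> 'x. fst p *\<^sub>R snd p)" using assms by (simp add: tvs_def)
  have "continuous_on UNIV (\<lambda>x::'x. (c, x))"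
    by (intro continuous_on_Pair continuous_on_const continuous_on_id)
  from continuous_on_compose2[OF s this] show ?thesis by simp
qed

lemma tvs_scale2:
  assumes "tvs TYPE('x::{real_vector,topological_space})" shows "continuous_on UNIV (\<lambda>a::real. a *\<^sub>R (X::'x))"
proof -
  have s: "continuous_on UNIV (\<lambda>p::real \<times> 'x. fst p *\<^sub>R snd p)" using assms by (simp add: tvs_def)
  have "continuous_on UNIV (\<lambda>a::real. (a, X))"
    by (intro continuous_on_Pair continuous_on_const continuous_on_id)
  from continuous_on_compose2[OF s this] show ?thesis by simp
qed

lemma tvs_affine:
  fixes c :: real and b :: "'x::{real_vector,topological_space}"
  assumes "tvs TYPE('x)" shows "continuous_on UNIV (\<lambda>x::'x. c *\<^sub>R (x - b))"
proof -
  have "continuous_on UNIV (\<lambda>x::'x. c *\<^sub>R (-b + x))"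
    using continuous_on_compose2[OF tvs_scale[OF assms, of c] tvs_add[OF assms, of "-b"]] by simp
  then show ?thesis by simp
qed

lemma absorb:
  fixes U :: "'x::{real_vector,topological_space} set"
  assumes "tvs TYPE('x)" "open U" "0 \<in> U"
  shows "\<exists>r>0. \<forall>a. \<bar>a\<bar> < r \<longrightarrow> a *\<^sub>R X \<in> U"
proof -
  have "open ((\<lambda>a::real. a *\<^sub>R X) -` U)" by (rule cont_open_vimage[OF tvs_scale2[OF assms(1)] assms(2)])
  moreover have "0 \<in> (\<lambda>a::real. a *\<^sub>R X) -` U" using assms(3) by simp
  ultimately obtain r where "r > 0" "ball 0 r \<subseteq> (\<lambda>a::real. a *\<^sub>R X) -` U"
    by (meson openE)
  then show ?thesis
  proof (intro exI[of _ r] conjI allI impI)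
    fix a :: real assume "\<bar>a\<bar> < r"
    then have "a \<in> ball 0 r" by (simp add: dist_real_def)
    then show "a *\<^sub>R X \<in> U" using \<open>ball 0 r \<subseteq> _\<close> by blast
  qed (simp)
qed

lemma cont_bounded:
  fixes \<phi> :: "'x::{real_vector,topological_space} \<Rightarrow> real"
  assumes tv: "tvs TYPE('x)" and lin: "linear \<phi>" and U: "open U" "0 \<in> U" and b: "\<And>u. u \<in> U \<Longrightarrow> \<phi> u \<le> 1"
  shows "continuous_on UNIV \<phi>"
proof (rule cont_from_vimage)
  fix B :: "real set" assume B: "open B"
  show "open (\<phi> -` B)"
  proof (subst open_subopen, intro ballI)
    fix X1 assume "X1 \<in> \<phi> -` B"
    then obtain e where e: "e > 0" "ball (\<phi> X1) e \<subseteq> B" using B by (meson openE vimageE)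
    define T where "T = (\<lambda>x. (2/e) *\<^sub>R (x - X1)) -` U \<inter> (\<lambda>x. (-(2/e)) *\<^sub>R (x - X1)) -` U"
    have "open T" unfolding T_def
      by (intro open_Int cont_open_vimage[OF tvs_affine[OF tv]] U)
    moreover have "X1 \<in> T" using U by (simp add: T_def)
    moreover have "T \<subseteq> \<phi> -` B"
    proof
      fix x assume "x \<in> T"
      then have "\<phi> ((2/e) *\<^sub>R (x - X1)) \<le> 1" "\<phi> ((-(2/e)) *\<^sub>R (x - X1)) \<le> 1"
        using b by (auto simp: T_def)
      moreover have "\<phi> ((2/e) *\<^sub>R (x - X1)) = (2/e) * (\<phi> x - \<phi> X1)"
        by (simp only: linear_scale[OF lin] linear_diff[OF lin] real_scaleR_def)
      moreover have "\<phi> ((-(2/e)) *\<^sub>R (x - X1)) = (-(2/e)) * (\<phi> x - \<phi> X1)"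
        by (simp only: linear_scale[OF lin] linear_diff[OF lin] real_scaleR_def)
      ultimately have "(2/e) * (\<phi> x - \<phi> X1) \<le> 1" "-((2/e) * (\<phi> x - \<phi> X1)) \<le> 1"
        by auto
      then have "\<phi> x - \<phi> X1 \<le> e/2" "-(\<phi> x - \<phi> X1) \<le> e/2" using e(1) by (simp_all add: field_simps)
      then have "\<bar>\<phi> x - \<phi> X1\<bar> \<le> e/2" using abs_le_iff by blast
      then have "\<phi> x \<in> ball (\<phi> X1) e" using e(1) by (simp add: dist_real_def abs_minus_commute)
      then show "x \<in> \<phi> -` B" using e(2) by auto
    qed
    ultimately show "\<exists>T. open T \<and> X1 \<in> T \<and> T \<subseteq> \<phi> -` B" by blast
  qed
qed



definition gauge :: "'w::real_vector set \<Rightarrow> 'w \<Rightarrow> real" where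
  "gauge G w = Inf {l. 0 < l \<and> (1/l) *\<^sub>R w \<in> G}"

lemma gauge_props:
  fixes G :: "'w::real_vector set"
  assumes cG: "convex G" and G0: "0 \<in> G" and ab: "\<And>w. \<exists>l>0. (1/l) *\<^sub>R w \<in> G"
  shows "sublin (gauge G)" "\<And>w. w \<in> G \<Longrightarrow> gauge G w \<le> 1" "\<And>w. w \<notin> G \<Longrightarrow> 1 \<le> gauge G w"
proof -
  define S where "S w = {l. 0 < l \<and> (1/l) *\<^sub>R w \<in> G}" for w
  have gS: "gauge G w = Inf (S w)" for w by (simp add: gauge_def S_def)
  have ne: "S w \<noteq> {}" for w using ab[of w] by (auto simp: S_def)
  have bdd: "bdd_below (S w)" for w by (rule bdd_belowI[where m=0]) (auto simp: S_def)
  have low: "gauge G w \<le> l" if "l \<in> S w" for w l unfolding gS by (rule cInf_lower[OF that bdd])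
  have great: "m \<le> gauge G w" if "\<And>l. l \<in> S w \<Longrightarrow> m \<le> l" for m w unfolding gS using ne that by (rule cInf_greatest)
  have star: "t *\<^sub>R g \<in> G" if "g \<in> G" "0 \<le> t" "t \<le> 1" for g t
    using convexD[OF cG that(1) G0, of t "1-t"] that by simp
  show "gauge G w \<le> 1" if "w \<in> G" for w using low[of 1 w] that by (simp add: S_def)
  show "1 \<le> gauge G w" if "w \<notin> G" for w
  proof (rule great)
    fix l assume l: "l \<in> S w"
    show "1 \<le> l"
    proof (rule ccontr)
      assume "\<not> 1 \<le> l"
      then have "l *\<^sub>R ((1/l) *\<^sub>R w) \<in> G" using l star[of "(1/l) *\<^sub>R w" l] by (auto simp: S_def)
      then show False using that l by (auto simp: S_def)
    qed
  qed
  have add: "gauge G (w1 + w2) \<le> gauge G w1 + gauge G w2" for w1 w2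
  proof -
    have key: "gauge G (w1 + w2) \<le> l1 + l2" if "l1 \<in> S w1" "l2 \<in> S w2" for l1 l2
    proof -
      have l: "0 < l1" "0 < l2" "(1/l1) *\<^sub>R w1 \<in> G" "(1/l2) *\<^sub>R w2 \<in> G" using that by (auto simp: S_def)
      have "(l1/(l1+l2)) *\<^sub>R ((1/l1) *\<^sub>R w1) + (l2/(l1+l2)) *\<^sub>R ((1/l2) *\<^sub>R w2) \<in> G"
      proof (rule convexD[OF cG l(3) l(4)])
        show "l1/(l1+l2) + l2/(l1+l2) = 1" using l by (simp add: add_divide_distrib[symmetric])
      qed (use l in auto)
      moreover have "(l1/(l1+l2)) *\<^sub>R ((1/l1) *\<^sub>R w1) + (l2/(l1+l2)) *\<^sub>R ((1/l2) *\<^sub>R w2)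
          = (1/(l1+l2)) *\<^sub>R (w1 + w2)"
        using l by (simp add: scaleR_add_right)
      ultimately have "l1 + l2 \<in> S (w1 + w2)" using l by (simp add: S_def)
      then show ?thesis by (rule low)
    qed
    have "gauge G (w1 + w2) - l2 \<le> gauge G w1" if "l2 \<in> S w2" for l2
      by (rule great) (use key that in force)
    then have "gauge G (w1 + w2) - gauge G w1 \<le> gauge G w2" by (intro great) force
    then show ?thesis by simp
  qed
  have le: "gauge G (c *\<^sub>R w) \<le> c * gauge G w" if "0 < c" for c w
  proof -
    have "gauge G (c *\<^sub>R w) / c \<le> gauge G w"
    proof (rule great)
      fix l assume l: "l \<in> S w"
      then have "c * l \<in> S (c *\<^sub>R w)" using that by (auto simp: S_def)
      then have "gauge G (c *\<^sub>R w) \<le> c * l" by (rule low)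
      then show "gauge G (c *\<^sub>R w) / c \<le> l" using that by (simp add: field_simps)
    qed
    then show ?thesis using that by (simp add: field_simps)
  qed
  have z: "gauge G 0 = 0"
  proof -
    have "S 0 = {0<..}" using G0 by (auto simp: S_def)
    then show ?thesis by (simp add: gS)
  qed
  have "gauge G (c *\<^sub>R w) = c * gauge G w" if "0 \<le> c" for c w
  proof (cases "c = 0")
    case True then show ?thesis using z by simp
  next
    case False then show ?thesis using homog_from_le[of "gauge G", OF le] that by simp
  qed
  with add show "sublin (gauge G)" by (simp add: sublin_def)
qed



lemma SEP:
  fixes E :: "('x::{real_vector,topological_space} \<times> real) set" and U :: "'x set"
  assumes tv: "tvs TYPE('x)" and Uo: "open U" and Uc: "convex U" and U0: "0 \<in> U"
    and Ec: "convex E" and e1: "e1 \<in> E" and dpos: "0 < \<delta>"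
    and disj: "\<And>u s. u \<in> U \<Longrightarrow> \<bar>s\<bar> < \<delta> \<Longrightarrow> (X0 - u, t0 - s) \<notin> E"
  shows "\<exists>\<phi> c \<alpha>. linear \<phi> \<and> continuous_on UNIV \<phi> \<and> (\<forall>X s. (X,s) \<in> E \<longrightarrow> \<phi> X + c * s \<le> \<alpha>) \<and> \<alpha> < \<phi> X0 + c * t0"
proof -
  define B :: "('x \<times> real) set" where "B = U \<times> {s. \<bar>s\<bar> < \<delta>}"
  define G where "G = {e - e1 + b | e b. e \<in> E \<and> b \<in> B}"
  define n0 where "n0 = (X0, t0)"
  define d0 where "d0 = n0 - e1"
  have cI: "convex {s::real. \<bar>s\<bar> < \<delta>}"
  proof -
    have "{s::real. \<bar>s\<bar> < \<delta>} = ball 0 \<delta>" by (auto simp: dist_real_def)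
    then show ?thesis by simp
  qed
  have cB: "convex B" unfolding B_def by (intro convex_Times Uc cI)
  have cG: "convex G"
  proof (rule convexI)
    fix g1 g2 and u v :: real assume g: "g1 \<in> G" "g2 \<in> G" "0 \<le> u" "0 \<le> v" "u + v = 1"
    then obtain e b e' b' where eb: "g1 = e - e1 + b" "e \<in> E" "b \<in> B" "g2 = e' - e1 + b'" "e' \<in> E" "b' \<in> B"
      unfolding G_def by blast
    have "u *\<^sub>R g1 + v *\<^sub>R g2 = (u *\<^sub>R e + v *\<^sub>R e') - (u + v) *\<^sub>R e1 + (u *\<^sub>R b + v *\<^sub>R b')"
      unfolding eb(1) eb(4) by (simp add: algebra_simps)
    also have "\<dots> = (u *\<^sub>R e + v *\<^sub>R e') - e1 + (u *\<^sub>R b + v *\<^sub>R b')" using g by simp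
    finally show "u *\<^sub>R g1 + v *\<^sub>R g2 \<in> G"
      unfolding G_def using convexD[OF Ec eb(2) eb(5)] convexD[OF cB eb(3) eb(6)] g by blast
  qed
  have BG: "b \<in> G" if "b \<in> B" for b
  proof -
    have "b = e1 - e1 + b" by simp
    then show ?thesis unfolding G_def using e1 that by blast
  qed
  have "(0::'x\<times>real) \<in> B" using U0 dpos by (simp add: B_def zero_prod_def)
  then have G0: "0 \<in> G" by (rule BG)
  have ab: "\<exists>l>0. (1/l) *\<^sub>R w \<in> G" for w
  proof -
    obtain X s where w: "w = (X, s)" by (cases w)
    obtain r where r: "r > 0" "\<And>a. \<bar>a\<bar> < r \<Longrightarrow> a *\<^sub>R X \<in> U" using absorb[OF tv Uo U0] by blast
    define l where "l = 2/r + 2*\<bar>s\<bar>/\<delta> + 1"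
    have l0: "l > 0" using r dpos by (simp add: l_def add_pos_nonneg)
    have h1: "0 \<le> 2*\<bar>s\<bar>/\<delta>" "0 < 2/r" "1/r \<le> 2/r" "\<bar>s\<bar>/\<delta> \<le> 2*\<bar>s\<bar>/\<delta>"
      using r dpos by (auto simp: divide_right_mono)
    have "1/r < l" using h1 by (simp add: l_def)
    then have "1/l < r" using r l0 by (simp add: field_simps)
    then have "(1/l) *\<^sub>R X \<in> U" using r l0 by simp
    moreover have "\<bar>s\<bar>/\<delta> < l" using h1 by (simp add: l_def)
    then have "\<bar>s / l\<bar> < \<delta>" using l0 dpos by (simp add: field_simps)
    ultimately have "(1/l) *\<^sub>R w \<in> B" by (simp add: w B_def)
    then show ?thesis using BG l0 by blast
  qed
  have d0G: "d0 \<notin> G"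
  proof
    assume "d0 \<in> G"
    then obtain e u s where "d0 = e - e1 + (u, s)" "e \<in> E" "u \<in> U" "\<bar>s\<bar> < \<delta>"
      unfolding G_def B_def by blast
    moreover then have "e = (X0 - u, t0 - s)" by (cases e) (auto simp: d0_def n0_def algebra_simps)
    ultimately show False using disj by blast
  qed
  note gp = gauge_props[OF cG G0 ab]
  obtain L where L: "linear L" "\<forall>x. L x \<le> gauge G x" "L d0 = gauge G d0"
    using HB2[OF gp(1)] by blast
  have Ld0: "1 \<le> L d0" using L(3) gp(3)[OF d0G] by simp
  have LG: "L g \<le> 1" if "g \<in> G" for g using spec[OF L(2), of g] gp(2)[OF that] by simp
  define \<phi> where "\<phi> X = L (X, 0)" for X
  define c where "c = L (0, 1)"
  have Lsplit: "L (X, s) = \<phi> X + c * s" for X s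
  proof -
    have "(X, s) = (X, 0) + s *\<^sub>R (0, 1)" by simp
    then have "L (X, s) = L (X, 0) + s *\<^sub>R L (0, 1)"
      by (metis linear_add[OF L(1)] linear_scale[OF L(1)])
    then show ?thesis by (simp add: \<phi>_def c_def)
  qed
  have lin: "linear \<phi>"
  proof (rule linearI)
    fix X Y show "\<phi> (X + Y) = \<phi> X + \<phi> Y" using Lsplit[of "X+Y" 0] linear_add[OF L(1), of "(X,0)" "(Y,0)"]
      by (simp add: \<phi>_def)
  next
    fix a :: real and X show "\<phi> (a *\<^sub>R X) = a *\<^sub>R \<phi> X"
      using linear_scale[OF L(1), of a "(X,0)"] by (simp add: \<phi>_def)
  qed
  have cont: "continuous_on UNIV \<phi>"
  proof (rule cont_bounded[OF tv lin Uo U0])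
    fix u assume "u \<in> U"
    then have "(u, 0) \<in> G" using BG dpos by (simp add: B_def)
    then show "\<phi> u \<le> 1" using LG by (simp add: \<phi>_def)
  qed
  have key: "L e + L b \<le> L n0" if "e \<in> E" "b \<in> B" for e b
  proof -
    have "e - e1 + b \<in> G" unfolding G_def using that by blast
    then have "L (e - e1 + b) \<le> 1" by (rule LG)
    then have "L e - L e1 + L b \<le> L d0" using Ld0 linear_add[OF L(1)] linear_diff[OF L(1)] by simp
    then show ?thesis using linear_diff[OF L(1)] by (simp add: d0_def)
  qed
  have "\<exists>b\<in>B. 0 < L b"
  proof (cases "c = 0")
    case False
    define s where "s = (if c > 0 then \<delta>/2 else -\<delta>/2)"
    have "\<bar>s\<bar> < \<delta>" using dpos by (simp add: s_def)
    then have "(0, s) \<in> B" using U0 by (simp add: B_def)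
    moreover have "0 < L (0, s)" using False dpos Lsplit[of 0 s] linear_0[OF lin]
      by (auto simp: s_def mult_pos_pos mult_neg_pos)
    ultimately show ?thesis by blast
  next
    case True
    obtain X1 s1 where d: "d0 = (X1, s1)" by (cases d0)
    have p: "0 < \<phi> X1" using Ld0 Lsplit[of X1 s1] True d by simp
    obtain r where r: "r > 0" "\<And>a. \<bar>a\<bar> < r \<Longrightarrow> a *\<^sub>R X1 \<in> U" using absorb[OF tv Uo U0] by blast
    have "(r/2) *\<^sub>R X1 \<in> U" using r by simp
    then have "((r/2) *\<^sub>R X1, 0) \<in> B" using dpos by (simp add: B_def)
    moreover have "0 < L ((r/2) *\<^sub>R X1, 0)" using linear_scale[OF lin, of "r/2" X1] mult_pos_pos[OF r(1) p[unfolded \<phi>_def]] by (simp add: \<phi>_def)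
    ultimately show ?thesis by blast
  qed
  then obtain b where b: "b \<in> B" "0 < L b" by blast
  show ?thesis
  proof (intro exI conjI allI impI)
    show "linear \<phi>" by (rule lin)
    show "continuous_on UNIV \<phi>" by (rule cont)
    fix X s assume "(X, s) \<in> E"
    from key[OF this b(1)] show "\<phi> X + c * s \<le> L n0 - L b" using Lsplit by simp
  next
    show "L n0 - L b < \<phi> X0 + c * t0" using b(2) Lsplit by (simp add: n0_def)
  qed
qed



lemma lin_comb:
  assumes "linear (f::'a::real_vector \<Rightarrow> real)" "linear g"
  shows "linear (\<lambda>x. a * f x + b * g x)"
proof (rule linearI)
  fix x y show "a * f (x + y) + b * g (x + y) = (a * f x + b * g x) + (a * f y + b * g y)"
    using linear_add[OF assms(1)] linear_add[OF assms(2)] by (simp add: algebra_simps)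
next
  fix c :: real and x show "a * f (c *\<^sub>R x) + b * g (c *\<^sub>R x) = c *\<^sub>R (a * f x + b * g x)"
    using linear_scale[OF assms(1)] linear_scale[OF assms(2)] by (simp add: algebra_simps)
qed

lemma FM_sep:
  fixes f :: "'x::{real_vector,topological_space} \<Rightarrow> ereal"
  assumes lc: "locally_convex_tvs TYPE('x)" and pr: "proper_fun f" and cv: "convex_efun f"
    and ls: "lsc_efun f" and lt: "ereal t0 < f X0"
  shows "\<exists>\<phi> c \<alpha>. linear \<phi> \<and> continuous_on UNIV \<phi> \<and> (\<forall>X s. f X \<le> ereal s \<longrightarrow> \<phi> X + c * s \<le> \<alpha>)
           \<and> \<alpha> < \<phi> X0 + c * t0 \<and> c \<le> 0"
proof -
  have tv: "tvs TYPE('x)" using lc by (simp add: locally_convex_tvs_def)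
  define E where "E = {(X, t::real). f X \<le> ereal t}"
  have Ec: "convex E" using cv by (simp add: convex_efun_def E_def)
  obtain X1 where X1: "f X1 \<noteq> \<infinity>" "f X1 \<noteq> -\<infinity>" using pr by (auto simp: proper_fun_def)
  then obtain r where r: "f X1 = ereal r" by (cases "f X1") auto
  have e1: "(X1, r) \<in> E" using r by (simp add: E_def)
  obtain c0 where c0: "ereal t0 < ereal c0" "ereal c0 < f X0" using ereal_dense2[OF lt] by blast
  define S where "S = {X. f X \<le> ereal c0}"
  have "closed S" using ls by (simp add: lsc_efun_def S_def)
  then have "open (- S)" by (simp add: open_Compl)
  moreover have eqf: "(\<lambda>x. (-1::real) *\<^sub>R (x - X0)) = (\<lambda>x. X0 - x)" by (auto simp: algebra_simps)
  ultimately have O: "open ((\<lambda>x. X0 - x) -` (- S))"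
    using cont_open_vimage[OF tvs_affine[OF tv, of "-1" X0]] by metis
  have "0 \<in> (\<lambda>x. X0 - x) -` (- S)" using c0 by (simp add: S_def not_le)
  then obtain U where U: "open U" "convex U" "0 \<in> U" "U \<subseteq> (\<lambda>x. X0 - x) -` (- S)"
    using lc O unfolding locally_convex_tvs_def by blast
  have dpos: "0 < c0 - t0" using c0 by simp
  have disj: "(X0 - u, t0 - s) \<notin> E" if "u \<in> U" "\<bar>s\<bar> < c0 - t0" for u s
  proof
    assume "(X0 - u, t0 - s) \<in> E"
    then have "f (X0 - u) \<le> ereal (t0 - s)" by (simp add: E_def)
    also have "\<dots> \<le> ereal c0" using that by simp
    finally have "X0 - u \<in> S" by (simp add: S_def)
    then show False using U(4) that(1) by auto
  qed
  obtain \<phi> c \<alpha> where sep: "linear \<phi>" "continuous_on UNIV \<phi>" "\<forall>X s. (X,s) \<in> E \<longrightarrow> \<phi> X + c * s \<le> \<alpha>"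
      "\<alpha> < \<phi> X0 + c * t0"
    using SEP[OF tv U(1) U(2) U(3) Ec e1 dpos disj] by blast
  have sepE: "\<phi> X + c * s \<le> \<alpha>" if "f X \<le> ereal s" for X s using sep(3) that by (simp add: E_def)
  have "c \<le> 0"
  proof (rule ccontr)
    assume "\<not> c \<le> 0"
    then have c: "c > 0" by simp
    define s where "s = max r ((\<alpha> - \<phi> X1)/c + 1)"
    have "f X1 \<le> ereal s" using r by (simp add: s_def)
    then have A: "\<phi> X1 + c * s \<le> \<alpha>" by (rule sepE)
    have "(\<alpha> - \<phi> X1)/c + 1 \<le> s" by (simp add: s_def)
    then have B: "c * ((\<alpha> - \<phi> X1)/c + 1) \<le> c * s" using c by (simp add: mult_left_mono)
    have C: "c * ((\<alpha> - \<phi> X1)/c + 1) = \<alpha> - \<phi> X1 + c" using c by (simp add: distrib_left)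
    show False using A B C c by linarith
  qed
  with sep sepE show ?thesis by blast
qed

lemma FM_neg:
  fixes f :: "'x::{real_vector,topological_space} \<Rightarrow> ereal"
  assumes pr: "proper_fun f" and lin: "linear \<phi>" and co: "continuous_on UNIV \<phi>"
    and sepE: "\<forall>X s. f X \<le> ereal s \<longrightarrow> \<phi> X + c * s \<le> \<alpha>" and lt: "\<alpha> < \<phi> X0 + c * t0" and c: "c < 0"
  shows "\<exists>\<psi> \<beta>. linear \<psi> \<and> continuous_on UNIV \<psi> \<and> (\<forall>X. ereal (\<psi> X + \<beta>) \<le> f X) \<and> t0 < \<psi> X0 + \<beta>"
proof (intro exI conjI allI)
  show "linear (\<lambda>X. (1/(-c)) * \<phi> X + 0 * \<phi> X)" by (rule lin_comb[OF lin lin])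
  show "continuous_on UNIV (\<lambda>X. (1/(-c)) * \<phi> X + 0 * \<phi> X)"
    by (intro continuous_intros co)
  fix X
  show "ereal ((1/(-c)) * \<phi> X + 0 * \<phi> X + \<alpha> / c) \<le> f X"
  proof (cases "f X")
    case (real s)
    then have "\<phi> X + c * s \<le> \<alpha>" using sepE by simp
    then have "(1/(-c)) * \<phi> X + \<alpha> / c \<le> s" using c by (simp add: field_simps)
    then show ?thesis using real by simp
  next
    case PInf then show ?thesis by simp
  next
    case MInf then show ?thesis using pr by (simp add: proper_fun_def)
  qed
next
  show "t0 < (1/(-c)) * \<phi> X0 + 0 * \<phi> X0 + \<alpha> / c" using lt c by (simp add: field_simps)
qed

lemma FM:
  fixes f :: "'x::{real_vector,topological_space} \<Rightarrow> ereal"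
  assumes lc: "locally_convex_tvs TYPE('x)" and pr: "proper_fun f" and cv: "convex_efun f"
    and ls: "lsc_efun f" and lt: "ereal t0 < f X0"
  shows "\<exists>\<psi> \<beta>. linear \<psi> \<and> continuous_on UNIV \<psi> \<and> (\<forall>X. ereal (\<psi> X + \<beta>) \<le> f X) \<and> t0 < \<psi> X0 + \<beta>"
proof -
  have dom: "\<exists>\<psi> \<beta>. linear \<psi> \<and> continuous_on UNIV \<psi> \<and> (\<forall>X. ereal (\<psi> X + \<beta>) \<le> f X) \<and> t0 < \<psi> X0 + \<beta>"
    if hh: "ereal t0 < f X0" "f X0 = ereal v" for t0 X0 v
  proof -
    obtain \<phi> c \<alpha> where s: "linear \<phi>" "continuous_on UNIV \<phi>" "\<forall>X s. f X \<le> ereal s \<longrightarrow> \<phi> X + c * s \<le> \<alpha>"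
        "\<alpha> < \<phi> X0 + c * t0" "c \<le> 0"
      using FM_sep[OF lc pr cv ls hh(1)] by blast
    have "\<phi> X0 + c * v \<le> \<alpha>" using s(3) hh(2) by simp
    then have "c * v < c * t0" using s(4) by simp
    moreover have "t0 < v" using hh by simp
    ultimately have "c < 0" using s(5) by (cases "c = 0") auto
    then show ?thesis using FM_neg[OF pr s(1) s(2) s(3) s(4)] by blast
  qed
  obtain X1 where X1: "f X1 \<noteq> \<infinity>" "f X1 \<noteq> -\<infinity>" using pr by (auto simp: proper_fun_def)
  then obtain r where r: "f X1 = ereal r" by (cases "f X1") auto
  obtain \<phi>1 \<beta>1 where m1: "linear \<phi>1" "continuous_on UNIV \<phi>1" "\<forall>X. ereal (\<phi>1 X + \<beta>1) \<le> f X"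
    using dom[of "r - 1" X1 r] r by auto
  obtain \<phi> c \<alpha> where s: "linear \<phi>" "continuous_on UNIV \<phi>" "\<forall>X s. f X \<le> ereal s \<longrightarrow> \<phi> X + c * s \<le> \<alpha>"
      "\<alpha> < \<phi> X0 + c * t0" "c \<le> 0"
    using FM_sep[OF lc pr cv ls lt] by blast
  show ?thesis
  proof (cases "c < 0")
    case True then show ?thesis using FM_neg[OF pr s(1) s(2) s(3) s(4)] by blast
  next
    case False
    then have c0: "c = 0" using s(5) by simp
    define k where "k = \<bar>t0 - \<phi>1 X0 - \<beta>1\<bar> / (\<phi> X0 - \<alpha>) + 1"
    have pos: "0 < \<phi> X0 - \<alpha>" using s(4) c0 by simp
    have k0: "0 \<le> k" using pos by (simp add: k_def)
    have "k * (\<phi> X0 - \<alpha>) = \<bar>t0 - \<phi>1 X0 - \<beta>1\<bar> + (\<phi> X0 - \<alpha>)"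
      using pos by (simp add: k_def field_simps)
    then have big: "t0 < \<phi>1 X0 + \<beta>1 + k * (\<phi> X0 - \<alpha>)" using pos by linarith
    show ?thesis
    proof (intro exI conjI allI)
      show "linear (\<lambda>X. 1 * \<phi>1 X + k * \<phi> X)" by (rule lin_comb[OF m1(1) s(1)])
      show "continuous_on UNIV (\<lambda>X. 1 * \<phi>1 X + k * \<phi> X)" by (intro continuous_intros m1(2) s(2))
      show "t0 < 1 * \<phi>1 X0 + k * \<phi> X0 + (\<beta>1 - k * \<alpha>)" using big by (simp add: algebra_simps)
      fix X
      show "ereal (1 * \<phi>1 X + k * \<phi> X + (\<beta>1 - k * \<alpha>)) \<le> f X"
      proof (cases "f X")
        case (real v)
        then have "\<phi> X + c * v \<le> \<alpha>" using s(3) by simp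
        then have "\<phi> X \<le> \<alpha>" using c0 by simp
        then have "k * \<phi> X \<le> k * \<alpha>" using k0 by (simp add: mult_left_mono)
        then have "ereal (1 * \<phi>1 X + k * \<phi> X + (\<beta>1 - k * \<alpha>)) \<le> ereal (\<phi>1 X + \<beta>1)" by simp
        also have "\<dots> \<le> f X" using m1(3) by simp
        finally show ?thesis .
      next
        case PInf then show ?thesis by simp
      next
        case MInf then show ?thesis using pr by (simp add: proper_fun_def)
      qed
    qed
  qed
qed



lemma minor_D:
  fixes P :: "(real^'n) set" and V1 :: "real^'n \<Rightarrow> 'x::{real_vector,topological_space}"
  assumes P0: "0 \<in> P" and V00: "V0 0 = 0" and V10: "V1 0 = 0" and A0: "0 \<in> A"
    and lin: "linear \<phi>" and co: "continuous_on UNIV \<phi>"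
    and mn: "\<forall>Y. ereal (\<phi> Y + \<beta>) \<le> risk P V0 V1 A Y"
  shows "(\<lambda>Y. - \<phi> Y) \<in> dualD A P V0 V1 \<and>
     ereal (\<beta> + \<phi> X) \<le> sigmaA A (\<lambda>Y. - \<phi> Y) + sigmaPV P V0 V1 (\<lambda>Y. - \<phi> Y) - ereal (- \<phi> X)"
proof -
  define \<psi> where "\<psi> Y = - \<phi> Y" for Y
  have linp: "linear \<psi>"
  proof (rule linearI)
    fix x y show "\<psi> (x + y) = \<psi> x + \<psi> y" using linear_add[OF lin] by (simp add: \<psi>_def)
  next
    fix c :: real and x show "\<psi> (c *\<^sub>R x) = c *\<^sub>R \<psi> x" using linear_scale[OF lin] by (simp add: \<psi>_def)
  qed
  have cop: "continuous_on UNIV \<psi>" unfolding \<psi>_def by (intro continuous_intros co)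
  have psi0: "\<psi> 0 = 0" using linear_0[OF linp] .
  have h: "\<beta> - (V0 x - \<psi> (V1 x)) \<le> \<psi> Y" if "Y \<in> A" "x \<in> P" for Y x
  proof -
    have "ereal (V0 x) \<in> {ereal (V0 x') | x'. x' \<in> P \<and> (Y - V1 x) + V1 x' \<in> A}" using that by auto
    then have "risk P V0 V1 A (Y - V1 x) \<le> ereal (V0 x)" unfolding risk_def by (rule Inf_lower)
    then have "ereal (\<phi> (Y - V1 x) + \<beta>) \<le> ereal (V0 x)" using mn order_trans by blast
    then show ?thesis using linear_diff[OF lin] by (simp add: \<psi>_def)
  qed
  have sA0: "sigmaA A \<psi> \<le> 0" unfolding sigmaA_def using A0 psi0 by (intro Inf_lower2[of "ereal (\<psi> 0)"]) (auto simp: zero_ereal_def)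
  have sAge: "ereal (\<beta> - (V0 x - \<psi> (V1 x))) \<le> sigmaA A \<psi>" if "x \<in> P" for x
    unfolding sigmaA_def using h that by (intro Inf_greatest) auto
  from sAge[OF P0] have "ereal \<beta> \<le> sigmaA A \<psi>" using V00 V10 psi0 by simp
  with sA0 obtain a where a: "sigmaA A \<psi> = ereal a" by (cases "sigmaA A \<psi>") auto
  have sP0: "sigmaPV P V0 V1 \<psi> \<le> 0"
  proof -
    have "ereal (V0 0 - \<psi> (V1 0)) \<in> {ereal (V0 x - \<psi> (V1 x)) | x. x \<in> P}" using P0 by blast
    then have "sigmaPV P V0 V1 \<psi> \<le> ereal (V0 0 - \<psi> (V1 0))" unfolding sigmaPV_def by (rule Inf_lower)
    then show ?thesis using V00 V10 psi0 by (simp add: zero_ereal_def)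
  qed
  have "ereal (\<beta> - a) \<le> sigmaPV P V0 V1 \<psi>" unfolding sigmaPV_def
  proof (intro Inf_greatest, clarify)
    fix x assume "x \<in> P"
    from sAge[OF this] a show "ereal (\<beta> - a) \<le> ereal (V0 x - \<psi> (V1 x))" by simp
  qed
  with sP0 obtain b where b: "sigmaPV P V0 V1 \<psi> = ereal b" "\<beta> - a \<le> b" by (cases "sigmaPV P V0 V1 \<psi>") auto
  have "\<psi> \<in> dualD A P V0 V1" using a b linp cop by (simp add: dualD_def topdual_def)
  moreover have "ereal (\<beta> + \<phi> X) \<le> sigmaA A \<psi> + sigmaPV P V0 V1 \<psi> - ereal (\<psi> X)"
    using a b by (simp add: \<psi>_def)
  ultimately show ?thesis by (simp add: \<psi>_def[abs_def])
qed

lemma upper_D: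
  fixes P :: "(real^'n) set" and V1 :: "real^'n \<Rightarrow> 'x::{real_vector,topological_space}"
  assumes P0: "0 \<in> P" and V00: "V0 0 = 0" and V10: "V1 0 = 0" and A0: "0 \<in> A"
    and D: "\<psi> \<in> dualD A P V0 V1"
  shows "sigmaA A \<psi> + sigmaPV P V0 V1 \<psi> - ereal (\<psi> X) \<le> risk P V0 V1 A X"
proof -
  have linp: "linear \<psi>" and fa: "sigmaA A \<psi> > -\<infinity>" and fp: "sigmaPV P V0 V1 \<psi> > -\<infinity>"
    using D by (auto simp: dualD_def topdual_def)
  have psi0: "\<psi> 0 = 0" using linear_0[OF linp] .
  have sA0: "sigmaA A \<psi> \<le> 0" unfolding sigmaA_def using A0 psi0 by (intro Inf_lower2[of "ereal (\<psi> 0)"]) (auto simp: zero_ereal_def)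
  have sP0: "sigmaPV P V0 V1 \<psi> \<le> 0"
  proof -
    have "ereal (V0 0 - \<psi> (V1 0)) \<in> {ereal (V0 x - \<psi> (V1 x)) | x. x \<in> P}" using P0 by blast
    then have "sigmaPV P V0 V1 \<psi> \<le> ereal (V0 0 - \<psi> (V1 0))" unfolding sigmaPV_def by (rule Inf_lower)
    then show ?thesis using V00 V10 psi0 by (simp add: zero_ereal_def)
  qed
  obtain a where a: "sigmaA A \<psi> = ereal a" using fa sA0 by (cases "sigmaA A \<psi>") auto
  obtain b where b: "sigmaPV P V0 V1 \<psi> = ereal b" using fp sP0 by (cases "sigmaPV P V0 V1 \<psi>") auto
  have "ereal (a + b - \<psi> X) \<le> risk P V0 V1 A X" unfolding risk_def
  proof (intro Inf_greatest, clarify)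
    fix x assume x: "x \<in> P" "X + V1 x \<in> A"
    have "sigmaA A \<psi> \<le> ereal (\<psi> (X + V1 x))" unfolding sigmaA_def using x by (intro Inf_lower) auto
    then have "a \<le> \<psi> X + \<psi> (V1 x)" using a linear_add[OF linp] by simp
    moreover have "sigmaPV P V0 V1 \<psi> \<le> ereal (V0 x - \<psi> (V1 x))" unfolding sigmaPV_def using x by (intro Inf_lower) auto
    then have "b \<le> V0 x - \<psi> (V1 x)" using b by simp
    ultimately show "ereal (a + b - \<psi> X) \<le> ereal (V0 x)" by simp
  qed
  then show ?thesis using a b by simp
qed

theorem mainTheorem16:
  fixes Xp :: "'x::{real_vector,topological_space} set"
    and P :: "(real^'n) set"
    and V0 :: "real^'n \<Rightarrow> real"
    and V1 :: "real^'n \<Rightarrow> 'x"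
    and A :: "'x set"
  assumes lc: "locally_convex_tvs TYPE('x)"
    and cone: "convex_cone Xp"
    and P0: "0 \<in> P"
    and V00: "V0 0 = 0"
    and V0sym: "\<And>x. V0 x \<ge> - V0 (- x)"
    and V10: "V1 0 = 0"
    and V1sym: "\<And>x. (- V1 (- x)) - V1 x \<in> Xp"
    and A0: "0 \<in> A"
    and Amono: "\<And>X Y. X \<in> A \<Longrightarrow> Y \<in> Xp \<Longrightarrow> X + Y \<in> A"
    and proper: "proper_fun (risk P V0 V1 A)"
    and convex: "convex_efun (risk P V0 V1 A)"
    and lsc: "lsc_efun (risk P V0 V1 A)"
  shows "dualD A P V0 V1 \<noteq> {} \<and>
         (\<forall>X. risk P V0 V1 A X =
              (SUP \<psi>\<in>dualD A P V0 V1. sigmaA A \<psi> + sigmaPV P V0 V1 \<psi> - ereal (\<psi> X)))"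
proof
  have ne: "risk P V0 V1 A X \<noteq> -\<infinity>" for X using proper by (simp add: proper_fun_def)
  have below: "\<exists>t. ereal t < risk P V0 V1 A X" for X
    using ne[of X] by (cases "risk P V0 V1 A X") (auto simp: lt_ex)
  obtain t where "ereal t < risk P V0 V1 A 0" using below by blast
  then obtain \<phi> \<beta> where m: "linear \<phi>" "continuous_on UNIV \<phi>" "\<forall>Y. ereal (\<phi> Y + \<beta>) \<le> risk P V0 V1 A Y"
    using FM[OF lc proper convex lsc] by blast
  show "dualD A P V0 V1 \<noteq> {}" using minor_D[where P=P and ?V0.0=V0 and ?V1.0=V1 and A=A, OF P0 V00 V10 A0 m] by blast
  show "\<forall>X. risk P V0 V1 A X = (SUP \<psi>\<in>dualD A P V0 V1. sigmaA A \<psi> + sigmaPV P V0 V1 \<psi> - ereal (\<psi> X))"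
  proof
    fix X
    show "risk P V0 V1 A X = (SUP \<psi>\<in>dualD A P V0 V1. sigmaA A \<psi> + sigmaPV P V0 V1 \<psi> - ereal (\<psi> X))"
    proof (rule antisym)
      show "(SUP \<psi>\<in>dualD A P V0 V1. sigmaA A \<psi> + sigmaPV P V0 V1 \<psi> - ereal (\<psi> X)) \<le> risk P V0 V1 A X"
        by (rule SUP_least) (rule upper_D[where P=P and ?V0.0=V0 and ?V1.0=V1 and A=A, OF P0 V00 V10 A0])
      show "risk P V0 V1 A X \<le> (SUP \<psi>\<in>dualD A P V0 V1. sigmaA A \<psi> + sigmaPV P V0 V1 \<psi> - ereal (\<psi> X))"
      proof (rule dense_le)
        fix y assume y: "y < risk P V0 V1 A X"
        show "y \<le> (SUP \<psi>\<in>dualD A P V0 V1. sigmaA A \<psi> + sigmaPV P V0 V1 \<psi> - ereal (\<psi> X))"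
        proof (cases y)
          case (real t)
          then obtain \<phi> \<beta> where m: "linear \<phi>" "continuous_on UNIV \<phi>" "\<forall>Y. ereal (\<phi> Y + \<beta>) \<le> risk P V0 V1 A Y"
              "t < \<phi> X + \<beta>"
            using FM[OF lc proper convex lsc] y by blast
          note md = minor_D[where P=P and ?V0.0=V0 and ?V1.0=V1 and A=A, OF P0 V00 V10 A0 m(1-3), of X]
          have "y \<le> ereal (\<beta> + \<phi> X)" using real m(4) by simp
          also have "\<dots> \<le> sigmaA A (\<lambda>Y. - \<phi> Y) + sigmaPV P V0 V1 (\<lambda>Y. - \<phi> Y) - ereal (- \<phi> X)"
            using md by blast
          finally show ?thesis using md by (intro SUP_upper2[of "\<lambda>Y. - \<phi> Y"]) auto
        next
          case PInf then show ?thesis using y by simp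
        next
          case MInf then show ?thesis by simp
        qed
      qed
    qed
  qed
qed

end
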